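(* Let $X$ be a real Banach space. The following statements are equivalent. (1) $X$ is rotund. (2) $S_X$ is uniquely remotal on $X\setminus\{0\}$. (3) $S_X$ is uniquely remotal on $X\setminus B_X$. (4) $S_X$ is uniquely remotal on $B_X\setminus\{0\}$. (5) $S_X$ is uniquely remotal on $B_X\setminus kB_X$ for any (equivalently, for some) $0<k<1$. (6) $S_X$ is uniquely remotal on $S_X$.
   Context: $B_X$ and $S_X$ denote the closed unit ball and unit sphere of $X$. For a non-empty bounded $F\subseteq X$ and $x\in X$, $r(F,x)=\sup\{\|x-y\|:y\in F\}$ and $Q_F(x)=\{y\in F:\|x-y\|= r(F,x)\}$ (the set of farthest points). $F$ is uniquely remotal on a set $A$ if $Q_F(x)$ is a singleton for every $x\in A$. $X$ is rotund if $\|\frac{x_1+x_2}{2}\|<1$ whenever $x_1,x_2\in S_X$, $x_1\neq x_2$. *)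

theory Defs
  imports "HOL-Analysis.Analysis"
begin

definition farthest_radius :: "'a::real_normed_vector set \<Rightarrow> 'a \<Rightarrow> real" where
  "farthest_radius F x = (SUP y\<in>F. norm (x - y))"

definition farthest_points :: "'a::real_normed_vector set \<Rightarrow> 'a \<Rightarrow> 'a set" where
  "farthest_points F x = {y \<in> F. norm (x - y) = farthest_radius F x}"

definition uniquely_remotal_on :: "'a::real_normed_vector set \<Rightarrow> 'a set \<Rightarrow> bool" where
  "uniquely_remotal_on F A \<longleftrightarrow> (\<forall>x\<in>A. is_singleton (farthest_points F x))"

definition rotund :: "'a::real_normed_vector itself \<Rightarrow> bool" where
  "rotund _ \<longleftrightarrow> (\<forall>x1 \<in> sphere (0::'a) 1. \<forall>x2 \<in> sphere 0 1.
      x1 \<noteq> x2 \<longrightarrow> norm ((1/2) *\<^sub>R (x1 + x2)) < 1)"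

end

theory Submission imports Defs begin
lemma radius_eq:
  fixes x :: "'a::real_normed_vector"
  assumes "x \<noteq> 0"
  shows "farthest_radius (sphere 0 1) x = norm x + 1"
proof -
  let ?u = "- (inverse (norm x) *\<^sub>R x)"
  have u: "?u \<in> sphere 0 1" using assms by simp
  have "x - ?u = (1 + inverse (norm x)) *\<^sub>R x" by (simp add: algebra_simps)
  hence "norm (x - ?u) = (1 + inverse (norm x)) * norm x"
    by (simp add: abs_of_nonneg)
  also have "\<dots> = norm x + 1" using assms by (simp add: field_simps)
  finally have e: "norm (x - ?u) = norm x + 1" .
  have le: "norm (x - y) \<le> norm x + 1" if "y \<in> sphere 0 1" for y
    using that norm_triangle_ineq4[of x y] by simp
  show ?thesis unfolding farthest_radius_def
    apply (rule cSup_eq_maximum)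
     apply (rule rev_image_eqI[OF u])
    using e le by auto
qed

lemma fp_eq:
  fixes x :: "'a::real_normed_vector"
  assumes "x \<noteq> 0"
  shows "farthest_points (sphere 0 1) x = {y. norm y = 1 \<and> norm (x - y) = norm x + 1}"
  using radius_eq[OF assms] unfolding farthest_points_def by auto

lemma rot_unique:
  fixes x y :: "'a::real_normed_vector"
  assumes rot: "rotund TYPE('a)" and x: "x \<noteq> 0" and y: "norm y = 1"
    and e: "norm (x - y) = norm x + 1"
  shows "y = - (inverse (norm x) *\<^sub>R x)"
proof (rule ccontr)
  let ?u = "inverse (norm x) *\<^sub>R x"
  let ?t = "norm x"
  assume ne: "y \<noteq> - ?u"
  have nu: "norm ?u = 1" using x by simp
  have "norm ((1/2) *\<^sub>R (?u + (-y))) < 1"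
    using rot ne nu y unfolding rotund_def by (metis mem_sphere_0 norm_minus_cancel minus_minus)
  moreover have "norm ((1/2) *\<^sub>R (?u + (-y))) = (1/2) * norm (?u - y)"
    by (simp only: norm_scaleR diff_conv_add_uminus)
  ultimately have lt: "norm (?u - y) < 2" by linarith
  have xu: "x = ?t *\<^sub>R ?u" using x by simp
  have tp: "?t > 0" using x by simp
  show False
  proof (cases "?t \<ge> 1")
    case True
    have "x - y = (?t - 1) *\<^sub>R ?u + (?u - y)"
      by (subst xu) (simp add: algebra_simps)
    hence "norm (x - y) \<le> norm ((?t - 1) *\<^sub>R ?u) + norm (?u - y)"
      by (metis norm_triangle_ineq)
    also have "norm ((?t - 1) *\<^sub>R ?u) = ?t - 1" using True nu by simp
    finally show False using lt e by linarith
  next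
    case False
    have "x - y = ?t *\<^sub>R (?u - y) + (1 - ?t) *\<^sub>R (-y)"
      by (subst xu) (simp add: algebra_simps)
    hence "norm (x - y) \<le> norm (?t *\<^sub>R (?u - y)) + norm ((1 - ?t) *\<^sub>R (-y))"
      by (metis norm_triangle_ineq)
    also have "norm (?t *\<^sub>R (?u - y)) = ?t * norm (?u - y)" by simp
    also have "norm ((1 - ?t) *\<^sub>R (-y)) = 1 - ?t" using False y by simp
    finally have "norm (x - y) \<le> ?t * norm (?u - y) + (1 - ?t)" .
    moreover have "?t * norm (?u - y) < ?t * 2" using tp lt by simp
    ultimately show False using e by linarith
  qed
qed

lemma rot_remotal:
  fixes A :: "'a::real_normed_vector set"
  assumes "rotund TYPE('a)" "0 \<notin> A"
  shows "uniquely_remotal_on (sphere 0 1) A"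
  unfolding uniquely_remotal_on_def
proof
  fix x assume "x \<in> A"
  hence x: "x \<noteq> 0" using assms by auto
  have "farthest_points (sphere 0 1) x = {- (inverse (norm x) *\<^sub>R x)}"
  proof -
    have "x + inverse (norm x) *\<^sub>R x = (1 + inverse (norm x)) *\<^sub>R x" by (simp add: algebra_simps)
    hence "norm (x + inverse (norm x) *\<^sub>R x) = (1 + inverse (norm x)) * norm x"
      by (simp add: abs_of_nonneg)
    also have "\<dots> = norm x + 1" using x by (simp add: field_simps)
    finally have "norm (x + inverse (norm x) *\<^sub>R x) = norm x + 1" .
    thus ?thesis unfolding fp_eq[OF x] using rot_unique[OF assms(1) x] x by auto
  qed
  thus "is_singleton (farthest_points (sphere 0 1) x)" by simp
qed


lemma nonrot_witness:
  fixes dummy :: "'a::real_normed_vector itself"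
  assumes "\<not> rotund TYPE('a)"
  shows "\<exists>m::'a. norm m = 1 \<and> (\<forall>s>0. \<not> is_singleton (farthest_points (sphere 0 1) (- (s *\<^sub>R m))))"
proof -
  obtain x1 x2 :: 'a where n1: "norm x1 = 1" and n2: "norm x2 = 1" and ne: "x1 \<noteq> x2"
    and ge: "\<not> norm ((1/2) *\<^sub>R (x1 + x2)) < 1"
    using assms unfolding rotund_def by auto
  have "norm (x1 + x2) \<le> 2" using norm_triangle_ineq[of x1 x2] n1 n2 by simp
  moreover have "norm (x1 + x2) \<ge> 2" using ge by simp
  ultimately have n12: "norm (x1 + x2) = 2" by simp
  define m where "m = (1/2) *\<^sub>R (x1 + x2)"
  have nm: "norm m = 1" unfolding m_def using n12 by simp
  have "\<not> is_singleton (farthest_points (sphere 0 1) (- (s *\<^sub>R m)))" if sp: "s > 0" for s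
  proof -
    let ?x = "- (s *\<^sub>R m)"
    have x0: "?x \<noteq> 0" using sp nm by auto
    have nx: "norm ?x = s" using sp nm by simp
    define a where "a = (s/2 + 1) *\<^sub>R x1 + (s/2) *\<^sub>R x2"
    define b where "b = (s/2) *\<^sub>R x1 + (s/2 + 1) *\<^sub>R x2"
    have ab: "a + b = (s + 1) *\<^sub>R (x1 + x2)" unfolding a_def b_def by (simp add: algebra_simps) (metis add.assoc add.commute field_sum_of_halves scaleR_add_left)
    have nab: "norm (a + b) = 2 * (s + 1)" using ab n12 sp by simp
    have na: "norm a \<le> s + 1"
    proof -
      have "norm a \<le> norm ((s/2 + 1) *\<^sub>R x1) + norm ((s/2) *\<^sub>R x2)"
        unfolding a_def by (rule norm_triangle_ineq)
      also have "\<dots> = s + 1" using n1 n2 sp by simp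
      finally show ?thesis .
    qed
    have nb: "norm b \<le> s + 1"
    proof -
      have "norm b \<le> norm ((s/2) *\<^sub>R x1) + norm ((s/2 + 1) *\<^sub>R x2)"
        unfolding b_def by (rule norm_triangle_ineq)
      also have "\<dots> = s + 1" using n1 n2 sp by simp
      finally show ?thesis .
    qed
    have "norm (a + b) \<le> norm a + norm b" by (rule norm_triangle_ineq)
    hence ea: "norm a = s + 1" using na nb nab by (smt (verit))
    have eb: "norm b = s + 1" using na nb nab \<open>norm (a + b) \<le> norm a + norm b\<close> by (smt (verit))
    have "?x - x1 = - a" unfolding a_def m_def by (simp add: algebra_simps)
    hence d1: "norm (?x - x1) = norm ?x + 1" using ea nx by simp
    have "?x - x2 = - b" unfolding b_def m_def by (simp add: algebra_simps)
    hence d2: "norm (?x - x2) = norm ?x + 1" using eb nx by simp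
    have "x1 \<in> farthest_points (sphere 0 1) ?x" "x2 \<in> farthest_points (sphere 0 1) ?x"
      unfolding fp_eq[OF x0] using d1 d2 n1 n2 by auto
    thus ?thesis using ne unfolding is_singleton_def by auto
  qed
  thus ?thesis using nm by blast
qed

theorem theorem3p1:
  shows "(rotund TYPE('a::banach) \<longleftrightarrow>
            uniquely_remotal_on (sphere (0::'a) 1) (UNIV - {0}))
       \<and> (rotund TYPE('a) \<longleftrightarrow>
            uniquely_remotal_on (sphere (0::'a) 1) (UNIV - cball 0 1))
       \<and> (rotund TYPE('a) \<longleftrightarrow>
            uniquely_remotal_on (sphere (0::'a) 1) (cball 0 1 - {0}))
       \<and> (rotund TYPE('a) \<longleftrightarrow>
            (\<forall>k::real. 0 < k \<and> k < 1 \<longrightarrow>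
               uniquely_remotal_on (sphere (0::'a) 1) (cball 0 1 - (\<lambda>x. k *\<^sub>R x) ` cball 0 1)))
       \<and> (rotund TYPE('a) \<longleftrightarrow>
            (\<exists>k::real. 0 < k \<and> k < 1 \<and>
               uniquely_remotal_on (sphere (0::'a) 1) (cball 0 1 - (\<lambda>x. k *\<^sub>R x) ` cball 0 1)))
       \<and> (rotund TYPE('a) \<longleftrightarrow>
            uniquely_remotal_on (sphere (0::'a) 1) (sphere 0 1))"
proof -
  let ?S = "sphere (0::'a) 1"
  let ?K = "\<lambda>k::real. cball (0::'a) 1 - (\<lambda>x. k *\<^sub>R x) ` cball 0 1"
  have K0: "0 \<notin> ?K k" for k
  proof -
    have "(0::'a) \<in> (\<lambda>x. k *\<^sub>R x) ` cball 0 1" by (rule image_eqI[of _ _ 0]) auto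
    thus ?thesis by blast
  qed
  have Kin: "- m \<in> ?K k" if nm: "norm m = 1" and k0: "0 < k" and k1: "k < 1" for m :: 'a and k
  proof -
    have "- m \<noteq> k *\<^sub>R z" if "z \<in> cball 0 1" for z
    proof
      assume "- m = k *\<^sub>R z"
      hence "norm (- m) = norm (k *\<^sub>R z)" by simp
      hence "1 = k * norm z" using nm k0 by simp
      moreover have "k * norm z \<le> k * 1" using that k0 by (intro mult_left_mono) auto
      ultimately show False using k1 by linarith
    qed
    hence "- m \<notin> (\<lambda>x. k *\<^sub>R x) ` cball 0 1" by blast
    moreover have "- m \<in> cball 0 1" using nm by simp
    ultimately show ?thesis by blast
  qed
  have bad: "rotund TYPE('a)" if u: "uniquely_remotal_on ?S A"
     and w: "\<And>m::'a. norm m = 1 \<Longrightarrow> \<exists>s>0. - (s *\<^sub>R m) \<in> A" for A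
  proof (rule ccontr)
    assume nr: "\<not> rotund TYPE('a)"
    obtain m :: 'a where nm: "norm m = 1" and h: "\<forall>s>0. \<not> is_singleton (farthest_points ?S (- (s *\<^sub>R m)))"
      using nonrot_witness[OF nr] by blast
    obtain s where "s > 0" "- (s *\<^sub>R m) \<in> A" using w[OF nm] by blast
    thus False using h u unfolding uniquely_remotal_on_def by blast
  qed
  show ?thesis
  proof (intro conjI iffI)
    assume r: "rotund TYPE('a)" show "uniquely_remotal_on ?S (UNIV - {0})" by (rule rot_remotal[OF r]) simp
  next
    assume u: "uniquely_remotal_on ?S (UNIV - {0})" show "rotund TYPE('a)"
      by (rule bad[OF u], rule exI[of _ 1]) auto
  next
    assume r: "rotund TYPE('a)" show "uniquely_remotal_on ?S (UNIV - cball 0 1)" by (rule rot_remotal[OF r]) simp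
  next
    assume u: "uniquely_remotal_on ?S (UNIV - cball 0 1)" show "rotund TYPE('a)"
      by (rule bad[OF u], rule exI[of _ 2]) auto
  next
    assume r: "rotund TYPE('a)" show "uniquely_remotal_on ?S (cball 0 1 - {0})" by (rule rot_remotal[OF r]) simp
  next
    assume u: "uniquely_remotal_on ?S (cball 0 1 - {0})" show "rotund TYPE('a)"
      by (rule bad[OF u], rule exI[of _ 1]) auto
  next
    assume r: "rotund TYPE('a)" show "\<forall>k. 0 < k \<and> k < 1 \<longrightarrow> uniquely_remotal_on ?S (?K k)"
      using rot_remotal[OF r K0] by blast
  next
    assume "\<forall>k. 0 < k \<and> k < 1 \<longrightarrow> uniquely_remotal_on ?S (?K k)"
    hence u: "uniquely_remotal_on ?S (?K (1/2))" by simp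
    show "rotund TYPE('a)"
      by (rule bad[OF u], rule exI[of _ 1]) (use Kin in simp)
  next
    assume r: "rotund TYPE('a)" show "\<exists>k. 0 < k \<and> k < 1 \<and> uniquely_remotal_on ?S (?K k)"
      by (rule exI[of _ "1/2"]) (simp add: rot_remotal[OF r K0])
  next
    assume "\<exists>k. 0 < k \<and> k < 1 \<and> uniquely_remotal_on ?S (?K k)"
    then obtain k where k: "0 < k" "k < 1" and u: "uniquely_remotal_on ?S (?K k)" by blast
    show "rotund TYPE('a)"
      by (rule bad[OF u], rule exI[of _ 1]) (use Kin k in simp)
  next
    assume r: "rotund TYPE('a)" show "uniquely_remotal_on ?S ?S" by (rule rot_remotal[OF r]) simp
  next
    assume u: "uniquely_remotal_on ?S ?S" show "rotund TYPE('a)"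
      by (rule bad[OF u], rule exI[of _ 1]) auto
  qed
qed

end
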